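(* Let $I=(x_1,\ldots,x_n)$ be any list of items with sizes $x_j\in(1/3,1]$. Let $I'=(x'_1,\ldots,x'_n)$ be a list with sizes in $(0,1]$ such that $x'_i>x_i$ for a single index $i\in[n]$ and $x'_j=x_j$ for all $j\ne i$. Then $\mathrm{BF}(I)\le\mathrm{BF}(I')$.
   Context: The online algorithm Best Fit (BF) processes a list of items with sizes in $(0,1]$ in the given order and packs the current item into the fullest bin (largest current load, i.e. sum of sizes of items in it) into which it fits without exceeding total size $1$, opening a new unit-capacity bin if it fits into no existing bin; items are never moved. $\mathrm{BF}(I)$ denotes the number of bins Best Fit uses on list $I$. *)

theory Defs
  imports Complex_Main
begin

text \<open>A packing state is the list of current bin loads (in order of opening).
  Best Fit packs item x into a bin of largest load among those with load + x \<le> 1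
  (ties broken by lowest index, which does not affect the number of bins),
  and opens a new bin if no bin fits.\<close>

definition fits :: "real list \<Rightarrow> real \<Rightarrow> nat \<Rightarrow> bool" where
  "fits L x j \<longleftrightarrow> j < length L \<and> L ! j + x \<le> 1"

definition bf_step :: "real list \<Rightarrow> real \<Rightarrow> real list" where
  "bf_step L x =
     (if \<exists>j. fits L x j then
        (let j = (LEAST j. fits L x j \<and> (\<forall>k. fits L x k \<longrightarrow> L ! k \<le> L ! j))
         in L[j := L ! j + x])
      else L @ [x])"

definition bf_pack :: "real list \<Rightarrow> real list" where
  "bf_pack I = foldl bf_step [] I"

definition BF :: "real list \<Rightarrow> nat" where
  "BF I = length (bf_pack I)"

end

theory Submission
  imports Defs "HOL-Library.Multiset"
begin

definition PI :: "real multiset \<Rightarrow> bool" where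
  "PI Z \<longleftrightarrow> (\<forall>e\<in>#Z. \<forall>f\<in>#Z - {#e#}. 1 < e + f)"

lemma PI_mem: "PI (add_mset z Z0) \<Longrightarrow> w \<in># Z0 \<Longrightarrow> 1 < z + w"
  unfolding PI_def by auto

lemma PI_del: "PI (add_mset z Z0) \<Longrightarrow> PI Z0"
  unfolding PI_def
proof (intro ballI)
  fix e f assume P: "\<forall>e\<in>#add_mset z Z0. \<forall>f\<in>#add_mset z Z0 - {#e#}. 1 < e + f"
    and e: "e \<in># Z0" and f: "f \<in># Z0 - {#e#}"
  have "f \<in># add_mset z Z0 - {#e#}"
  proof (cases "e = z")
    case True then show ?thesis using f by (auto dest: in_diffD)
  next
    case False then show ?thesis using f by auto
  qed
  then show "1 < e + f" using P e by auto
qed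

lemma PI_add: "PI Z \<Longrightarrow> \<forall>z\<in>#Z. 1 < y + z \<Longrightarrow> PI (add_mset y Z)"
  unfolding PI_def
proof (intro ballI)
  fix e f assume P: "\<forall>e\<in>#Z. \<forall>f\<in>#Z - {#e#}. 1 < e + f" and Y: "\<forall>z\<in>#Z. 1 < y + z"
    and e: "e \<in># add_mset y Z" and f: "f \<in># add_mset y Z - {#e#}"
  show "1 < e + f"
  proof (cases "e = y")
    case True then show ?thesis using f Y by auto
  next
    case False
    then have eZ: "e \<in># Z" using e by auto
    have "add_mset y Z - {#e#} = add_mset y (Z - {#e#})" using False by auto
    then have "f = y \<or> f \<in># Z - {#e#}" using f by auto
    then show ?thesis using P Y eZ by (auto simp: add.commute)
  qed
qed

definition best :: "real multiset \<Rightarrow> real \<Rightarrow> real \<Rightarrow> bool" where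
  "best M y e \<longleftrightarrow> e \<in># M \<and> e + y \<le> 1 \<and> (\<forall>f\<in>#M. f + y \<le> 1 \<longrightarrow> f \<le> e)"

definition stp :: "real multiset \<Rightarrow> real \<Rightarrow> real multiset \<Rightarrow> bool" where
  "stp M y N \<longleftrightarrow> (\<exists>e. best M y e \<and> N = add_mset (e+y) (M - {#e#}))
     \<or> ((\<forall>f\<in>#M. 1 < f + y) \<and> N = add_mset y M)"

lemma bf_step_stp: "stp (mset L) y (mset (bf_step L y))"
proof (cases "\<exists>j. fits L y j")
  case True
  define P where "P = (\<lambda>j. fits L y j \<and> (\<forall>k. fits L y k \<longrightarrow> L ! k \<le> L ! j))"
  have fin: "finite ((\<lambda>j. L ! j) ` {j. fits L y j})" unfolding fits_def by auto
  have ne: "(\<lambda>j. L ! j) ` {j. fits L y j} \<noteq> {}" using True by auto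
  have "Max ((\<lambda>j. L ! j) ` {j. fits L y j}) \<in> (\<lambda>j. L ! j) ` {j. fits L y j}"
    using Max_in[OF fin ne] .
  then obtain j where j: "fits L y j" "L ! j = Max ((\<lambda>j. L ! j) ` {j. fits L y j})" by auto
  have "P j" unfolding P_def using j Max_ge[OF fin] by (auto simp del: Max_ge_iff)
  then have PL: "P (LEAST j. P j)" by (rule LeastI)
  define l where "l = (LEAST j. P j)"
  have st: "bf_step L y = L[l := L ! l + y]"
    unfolding bf_step_def l_def P_def using True by (simp add: Let_def)
  have Pl: "P l" using PL l_def by simp
  then have ll: "l < length L" "L ! l + y \<le> 1" unfolding P_def fits_def by auto
  have "best (mset L) y (L ! l)"
    unfolding best_def
  proof (intro conjI ballI impI)
    show "L ! l \<in># mset L" using ll by simp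
    show "L ! l + y \<le> 1" using ll by simp
    fix f assume "f \<in># mset L" "f + y \<le> 1"
    then obtain k where "k < length L" "f = L ! k" by (auto simp: in_set_conv_nth)
    then show "f \<le> L ! l" using Pl \<open>f + y \<le> 1\<close> unfolding P_def fits_def by auto
  qed
  moreover have "mset (bf_step L y) = add_mset (L ! l + y) (mset L - {#L ! l#})"
    using st ll by (simp add: mset_update)
  ultimately show ?thesis unfolding stp_def by blast
next
  case False
  have "\<forall>f\<in>#mset L. 1 < f + y"
  proof
    fix f assume "f \<in># mset L"
    then obtain k where "k < length L" "f = L ! k" by (auto simp: in_set_conv_nth)
    then show "1 < f + y" using False unfolding fits_def by force
  qed
  moreover have "bf_step L y = L @ [y]" unfolding bf_step_def using False by auto
  ultimately show ?thesis unfolding stp_def by simp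
qed


definition R0 :: "real multiset \<Rightarrow> real multiset \<Rightarrow> bool" where
  "R0 M M' \<longleftrightarrow> (\<exists>Z D D' a a'. M = add_mset a (Z + D) \<and> M' = add_mset a' (Z + D')
     \<and> 1/3 < a \<and> a \<le> a' \<and> size D = size D' \<and> (\<forall>d\<in>#D. 2/3 < d) \<and> (\<forall>d\<in>#D'. 2/3 < d)
     \<and> PI Z \<and> (\<forall>z\<in>#Z. 1/3 < z \<and> 1 < z + a))"

definition R1 :: "real multiset \<Rightarrow> real multiset \<Rightarrow> bool" where
  "R1 M M' \<longleftrightarrow> (\<exists>Z D D' b c. M = Z + D \<and> M' = add_mset b (add_mset c (Z + D'))
     \<and> 1/3 < b \<and> 1/3 < c \<and> 1 < b + c \<and> size D = Suc (size D')
     \<and> (\<forall>d\<in>#D. 2/3 < d) \<and> (\<forall>d\<in>#D'. 2/3 < d)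
     \<and> PI Z \<and> (\<forall>z\<in>#Z. 1/3 < z \<and> 1 < z + b \<and> 1 < z + c))"

lemma R0I: "1/3 < a \<Longrightarrow> a \<le> a' \<Longrightarrow> size D = size D' \<Longrightarrow> \<forall>d\<in>#D. 2/3 < d \<Longrightarrow> \<forall>d\<in>#D'. 2/3 < d
  \<Longrightarrow> PI Z \<Longrightarrow> \<forall>z\<in>#Z. 1/3 < z \<and> 1 < z + a \<Longrightarrow> R0 (add_mset a (Z + D)) (add_mset a' (Z + D'))"
  unfolding R0_def by (rule exI[where x=Z], rule exI[where x=D], rule exI[where x=D'], rule exI[where x=a], rule exI[where x=a']) simp

lemma R1I: "1/3 < b \<Longrightarrow> 1/3 < c \<Longrightarrow> 1 < b + c \<Longrightarrow> size D = Suc (size D')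
  \<Longrightarrow> \<forall>d\<in>#D. 2/3 < d \<Longrightarrow> \<forall>d\<in>#D'. 2/3 < d
  \<Longrightarrow> PI Z \<Longrightarrow> \<forall>z\<in>#Z. 1/3 < z \<and> 1 < z + b \<and> 1 < z + c
  \<Longrightarrow> R1 (Z + D) (add_mset b (add_mset c (Z + D')))"
  unfolding R1_def by (rule exI[where x=Z], rule exI[where x=D], rule exI[where x=D'], rule exI[where x=b], rule exI[where x=c]) simp

lemma R0_step:
  assumes R: "R0 M M'" and S: "stp M y N" and S': "stp M' y N'" and y: "1/3 < y"
  shows "R0 N N' \<or> R1 N N'"
proof -
  obtain Z D D' a a' where M: "M = add_mset a (Z + D)" and M': "M' = add_mset a' (Z + D')"
    and a: "1/3 < a" "a \<le> a'" and sz: "size D = size D'" and dD: "\<forall>d\<in>#D. 2/3 < d"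
    and dD': "\<forall>d\<in>#D'. 2/3 < d" and PZ: "PI Z" and Zc: "\<forall>z\<in>#Z. 1/3 < z \<and> 1 < z + a"
    using R unfolding R0_def by blast
  show ?thesis
  proof (cases "\<exists>e. best M y e \<and> N = add_mset (e+y) (M - {#e#})")
    case True
    then obtain e where be: "best M y e" and N: "N = add_mset (e+y) (M - {#e#})" by blast
    have eM: "e \<in># M" "e + y \<le> 1" and emax: "\<forall>f\<in>#M. f + y \<le> 1 \<longrightarrow> f \<le> e"
      using be unfolding best_def by auto
    have eD: "e \<notin># D" using dD eM y by force
    show ?thesis
    proof (cases "e \<in># Z")
      case True
      then obtain Z0 where Z: "Z = add_mset e Z0" by (metis multi_member_split)
      have N2: "N = add_mset a (Z0 + add_mset (e+y) D)" using N M Z by simp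
      have PZ0: "PI Z0" using PZ Z PI_del by blast
      have e3: "1/3 < e" using Zc True by auto
      show ?thesis
      proof (cases "\<exists>e'. best M' y e' \<and> N' = add_mset (e'+y) (M' - {#e'#})")
        case True
        then obtain e' where be': "best M' y e'" and N': "N' = add_mset (e'+y) (M' - {#e'#})" by blast
        have e'M: "e' \<in># M'" "e' + y \<le> 1" and e'max: "\<forall>f\<in>#M'. f + y \<le> 1 \<longrightarrow> f \<le> e'"
          using be' unfolding best_def by auto
        have e'D: "e' \<notin># D'" using dD' e'M y by force
        have ee': "e \<le> e'" using e'max eM Z M' by auto
        show ?thesis
        proof (cases "e' \<in># Z")
          case True
          then have "e' \<le> e" using emax e'M M by auto
          then have "e' = e" using ee' by simp
          then have "N' = add_mset a' (Z0 + add_mset (e+y) D')" using N' M' Z by simp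
          moreover have "R0 N (add_mset a' (Z0 + add_mset (e+y) D'))"
            unfolding N2 using a sz dD dD' PZ0 Zc Z e3 y by (intro R0I) auto
          ultimately show ?thesis by simp
        next
          case False
          then have e'a: "e' = a'" using e'M e'D M' by auto
          have N'2: "N' = add_mset e (Z0 + add_mset (a'+y) D')" using N' M' Z e'a by simp
          have N3: "N = add_mset a (Z0 + add_mset (e+y) D)" using N2 .
          have ae: "a \<le> e" using emax M a e'M e'a by auto
          have "R0 (add_mset a (Z0 + add_mset (e+y) D)) (add_mset e (Z0 + add_mset (a'+y) D'))"
            using a ae sz dD dD' PZ0 Zc Z e3 y by (intro R0I) auto
          then show ?thesis using N3 N'2 by simp
        qed
      next
        case False
        then have "\<forall>f\<in>#M'. 1 < f + y" using S' unfolding stp_def by blast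
        then show ?thesis using eM M' Z by auto
      qed
    next
      case False
      then have ea: "e = a" using eM eD M by auto
      have N2: "N = Z + add_mset (a+y) D" using N M ea by simp
      show ?thesis
      proof (cases "\<exists>e'. best M' y e' \<and> N' = add_mset (e'+y) (M' - {#e'#})")
        case True
        then obtain e' where be': "best M' y e'" and N': "N' = add_mset (e'+y) (M' - {#e'#})" by blast
        have e'M: "e' \<in># M'" "e' + y \<le> 1" and e'max: "\<forall>f\<in>#M'. f + y \<le> 1 \<longrightarrow> f \<le> e'"
          using be' unfolding best_def by auto
        have e'D: "e' \<notin># D'" using dD' e'M y by force
        show ?thesis
        proof (cases "e' \<in># Z")
          case True
          then obtain Z0 where Z: "Z = add_mset e' Z0" by (metis multi_member_split)
          have PZ0: "PI Z0" using PZ Z PI_del by blast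
          have e'a: "e' \<le> a" using emax e'M M Z ea by auto
          have e3: "1/3 < e'" using Zc True by auto
          have "R0 (add_mset e' (Z0 + add_mset (a+y) D)) (add_mset a' (Z0 + add_mset (e'+y) D'))"
            using a e'a sz dD dD' PZ0 Zc Z e3 y PI_mem[OF PZ[unfolded Z]]
            by (intro R0I) (auto simp: add.commute)
          moreover have "N = add_mset e' (Z0 + add_mset (a+y) D)" using N2 Z by simp
          moreover have "N' = add_mset a' (Z0 + add_mset (e'+y) D')" using N' M' Z by simp
          ultimately show ?thesis by simp
        next
          case False
          then have e'a: "e' = a'" using e'M e'D M' by auto
          have "R0 (add_mset (a+y) (Z + D)) (add_mset (a'+y) (Z + D'))"
            using a sz dD dD' PZ Zc y by (intro R0I) auto
          moreover have "N' = add_mset (a'+y) (Z + D')" using N' M' e'a by simp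
          ultimately show ?thesis using N2 by simp
        qed
      next
        case False
        then have nf: "\<forall>f\<in>#M'. 1 < f + y" and N': "N' = add_mset y M'"
          using S' unfolding stp_def by blast+
        have "R1 (Z + add_mset (a+y) D) (add_mset a' (add_mset y (Z + D')))"
          using a sz dD dD' PZ Zc y nf M' by (intro R1I) auto
        then show ?thesis using N2 N' M' by (simp add: add_mset_commute)
      qed
    qed
  next
    case False
    then have nf: "\<forall>f\<in>#M. 1 < f + y" and N: "N = add_mset y M"
      using S unfolding stp_def by blast+
    have nf': "\<forall>f\<in>#M'. 1 < f + y"
    proof
      fix f assume f: "f \<in># M'"
      show "1 < f + y"
      proof (cases "f \<in># D'")
        case True then show ?thesis using dD' y by force
      next
        case False
        then have "f = a' \<or> f \<in># Z" using f M' by auto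
        then show ?thesis using nf M a by auto
      qed
    qed
    then have N': "N' = add_mset y M'" using S' unfolding stp_def best_def by force
    have "R0 (add_mset a (add_mset y Z + D)) (add_mset a' (add_mset y Z + D'))"
      using a sz dD dD' y nf M Zc
      by (intro R0I PI_add[OF PZ]) (auto simp: add.commute)
    then show ?thesis using N N' M M' by (simp add: add_mset_commute)
  qed
qed


lemma R1_step:
  assumes R: "R1 M M'" and S: "stp M y N" and S': "stp M' y N'" and y: "1/3 < y"
  shows "R0 N N' \<or> R1 N N'"
proof -
  obtain Z D D' b c where M: "M = Z + D" and M': "M' = add_mset b (add_mset c (Z + D'))"
    and bc: "1/3 < b" "1/3 < c" "1 < b + c" and sz: "size D = Suc (size D')"
    and dD: "\<forall>d\<in>#D. 2/3 < d"
    and dD': "\<forall>d\<in>#D'. 2/3 < d" and PZ: "PI Z" and Zc: "\<forall>z\<in>#Z. 1/3 < z \<and> 1 < z + b \<and> 1 < z + c"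
    using R unfolding R1_def by blast
  show ?thesis
  proof (cases "\<exists>e. best M y e \<and> N = add_mset (e+y) (M - {#e#})")
    case True
    then obtain e where be: "best M y e" and N: "N = add_mset (e+y) (M - {#e#})" by blast
    have eM: "e \<in># M" "e + y \<le> 1" and emax: "\<forall>f\<in>#M. f + y \<le> 1 \<longrightarrow> f \<le> e"
      using be unfolding best_def by auto
    have eD: "e \<notin># D" using dD eM y by force
    then have eZ: "e \<in># Z" using eM M by auto
    then obtain Z0 where Z: "Z = add_mset e Z0" by (metis multi_member_split)
    have N2: "N = Z0 + add_mset (e+y) D" using N M Z by simp
    have PZ0: "PI Z0" using PZ Z PI_del by blast
    have e3: "1/3 < e" using Zc eZ by auto
    show ?thesis
    proof (cases "\<exists>e'. best M' y e' \<and> N' = add_mset (e'+y) (M' - {#e'#})")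
      case True
      then obtain e' where be': "best M' y e'" and N': "N' = add_mset (e'+y) (M' - {#e'#})" by blast
      have e'M: "e' \<in># M'" "e' + y \<le> 1" and e'max: "\<forall>f\<in>#M'. f + y \<le> 1 \<longrightarrow> f \<le> e'"
        using be' unfolding best_def by auto
      have e'D: "e' \<notin># D'" using dD' e'M y by force
      have ee': "e \<le> e'" using e'max eM Z M' by auto
      show ?thesis
      proof (cases "e' \<in># Z")
        case True
        then have "e' \<le> e" using emax e'M M by auto
        then have "e' = e" using ee' by simp
        then have "N' = add_mset b (add_mset c (Z0 + add_mset (e+y) D'))" using N' M' Z by simp
        moreover have "R1 (Z0 + add_mset (e+y) D) (add_mset b (add_mset c (Z0 + add_mset (e+y) D')))"
          using bc sz dD dD' PZ0 Zc Z e3 y by (intro R1I) auto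
        ultimately show ?thesis using N2 by simp
      next
        case False
        then have "e' = b \<or> e' = c" using e'M e'D M' by auto
        then show ?thesis
        proof
          assume e'b: "e' = b"
          have "N' = add_mset e (add_mset c (Z0 + add_mset (b+y) D'))" using N' M' Z e'b
            by (simp add: add_mset_commute)
          moreover have "R1 (Z0 + add_mset (e+y) D) (add_mset e (add_mset c (Z0 + add_mset (b+y) D')))"
            using bc sz dD dD' PZ0 Zc Z e3 y PI_mem[OF PZ[unfolded Z]] by (intro R1I) (auto simp: add.commute)
          ultimately show ?thesis using N2 by simp
        next
          assume e'c: "e' = c"
          have "N' = add_mset e (add_mset b (Z0 + add_mset (c+y) D'))" using N' M' Z e'c
            by (simp add: add_mset_commute)
          moreover have "R1 (Z0 + add_mset (e+y) D) (add_mset e (add_mset b (Z0 + add_mset (c+y) D')))"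
            using bc sz dD dD' PZ0 Zc Z e3 y PI_mem[OF PZ[unfolded Z]] by (intro R1I) (auto simp: add.commute)
          ultimately show ?thesis using N2 by simp
        qed
      qed
    next
      case False
      then have "\<forall>f\<in>#M'. 1 < f + y" using S' unfolding stp_def by blast
      then show ?thesis using eM M' Z by auto
    qed
  next
    case False
    then have nf: "\<forall>f\<in>#M. 1 < f + y" and N: "N = add_mset y M"
      using S unfolding stp_def by blast+
    show ?thesis
    proof (cases "\<exists>e'. best M' y e' \<and> N' = add_mset (e'+y) (M' - {#e'#})")
      case True
      then obtain e' where be': "best M' y e'" and N': "N' = add_mset (e'+y) (M' - {#e'#})" by blast
      have e'M: "e' \<in># M'" "e' + y \<le> 1"
        using be' unfolding best_def by auto
      have e'D: "e' \<notin># D'" using dD' e'M y by force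
      have e'Z: "e' \<notin># Z" using nf M e'M by force
      have "e' = b \<or> e' = c" using e'M e'D e'Z M' by auto
      then show ?thesis
      proof
        assume e'b: "e' = b"
        have "N' = add_mset c (Z + add_mset (b+y) D')" using N' M' e'b by (simp add: add_mset_commute)
        moreover have "R0 (add_mset y (Z + D)) (add_mset c (Z + add_mset (b+y) D'))"
          using bc sz dD dD' PZ Zc y e'M e'b nf M by (intro R0I) (auto simp: add.commute)
        ultimately show ?thesis using N M by simp
      next
        assume e'c: "e' = c"
        have "N' = add_mset b (Z + add_mset (c+y) D')" using N' M' e'c by (simp add: add_mset_commute)
        moreover have "R0 (add_mset y (Z + D)) (add_mset b (Z + add_mset (c+y) D'))"
          using bc sz dD dD' PZ Zc y e'M e'c nf M by (intro R0I) (auto simp: add.commute)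
        ultimately show ?thesis using N M by simp
      qed
    next
      case False
      then have nf': "\<forall>f\<in>#M'. 1 < f + y" and N': "N' = add_mset y M'"
        using S' unfolding stp_def by blast+
      have "R1 (add_mset y Z + D) (add_mset b (add_mset c (add_mset y Z + D')))"
        using bc sz dD dD' y nf nf' M M' Zc
        by (intro R1I PI_add[OF PZ]) (auto simp: add.commute)
      then show ?thesis using N N' M M' by (simp add: add_mset_commute)
    qed
  qed
qed

lemma init_step:
  assumes PM: "PI M" and M3: "\<forall>e\<in>#M. 1/3 < e" and x: "1/3 < x" "x < x'"
    and S: "stp M x N" and S': "stp M x' N'"
  shows "R0 N N' \<or> R1 N N'"
proof (cases "\<exists>e'. best M x' e' \<and> N' = add_mset (e'+x') (M - {#e'#})")
  case True
  then obtain e' where be': "best M x' e'" and N': "N' = add_mset (e'+x') (M - {#e'#})" by blast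
  have e'M: "e' \<in># M" "e' + x' \<le> 1" using be' unfolding best_def by auto
  then have "\<not> (\<forall>f\<in>#M. 1 < f + x)" using x by force
  then obtain e where be: "best M x e" and N: "N = add_mset (e+x) (M - {#e#})"
    using S unfolding stp_def by blast
  have eM: "e \<in># M" "e + x \<le> 1" and emax: "\<forall>f\<in>#M. f + x \<le> 1 \<longrightarrow> f \<le> e"
    using be unfolding best_def by auto
  have e'e: "e' \<le> e" using emax e'M x by auto
  obtain Z1 where M: "M = add_mset e Z1" using eM by (metis multi_member_split)
  have PZ1: "PI Z1" using PM M PI_del by blast
  show ?thesis
  proof (cases "e' = e")
    case True
    have "R0 (add_mset (e+x) (Z1 + {#})) (add_mset (e+x') (Z1 + {#}))"
      using x M3 M PZ1 by (intro R0I) auto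
    then show ?thesis using N N' M True by simp
  next
    case False
    then have "e' \<in># Z1" using e'M M by auto
    then obtain Z0 where Z1: "Z1 = add_mset e' Z0" by (metis multi_member_split)
    have PZ0: "PI Z0" using PZ1 Z1 PI_del by blast
    have "R0 (add_mset e' (Z0 + {#e+x#})) (add_mset e (Z0 + {#e'+x'#}))"
      using x M3 M Z1 PZ0 e'e PI_mem[OF PZ1[unfolded Z1]] by (intro R0I) (auto simp: add.commute)
    moreover have "N = add_mset e' (Z0 + {#e+x#})" using N M Z1 by simp
    moreover have "N' = add_mset e (Z0 + {#e'+x'#})" using N' M Z1 False by (simp add: add_mset_commute)
    ultimately show ?thesis by simp
  qed
next
  case False
  then have nf': "\<forall>f\<in>#M. 1 < f + x'" and N': "N' = add_mset x' M"
    using S' unfolding stp_def by blast+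
  show ?thesis
  proof (cases "\<exists>e. best M x e \<and> N = add_mset (e+x) (M - {#e#})")
    case True
    then obtain e where be: "best M x e" and N: "N = add_mset (e+x) (M - {#e#})" by blast
    have eM: "e \<in># M" using be unfolding best_def by auto
    obtain Z0 where M: "M = add_mset e Z0" using eM by (metis multi_member_split)
    have PZ0: "PI Z0" using PM M PI_del by blast
    have "R1 (Z0 + {#e+x#}) (add_mset e (add_mset x' (Z0 + {#})))"
      using x M3 M PZ0 nf' PI_mem[OF PM[unfolded M]] by (intro R1I) (auto simp: add.commute)
    moreover have "N = Z0 + {#e+x#}" using N M by simp
    moreover have "N' = add_mset e (add_mset x' (Z0 + {#}))" using N' M by (simp add: add_mset_commute)
    ultimately show ?thesis by simp
  next
    case False
    then have nf: "\<forall>f\<in>#M. 1 < f + x" and N: "N = add_mset x M"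
      using S unfolding stp_def by blast+
    have "R0 (add_mset x (M + {#})) (add_mset x' (M + {#}))"
      using x M3 PM nf by (intro R0I) (auto simp: add.commute)
    then show ?thesis using N N' by simp
  qed
qed

lemma inv_step:
  assumes "PI M" "\<forall>e\<in>#M. 1/3 < e" "stp M y N" "1/3 < y"
  shows "PI N \<and> (\<forall>e\<in>#N. 1/3 < e)"
proof (cases "\<exists>e. best M y e \<and> N = add_mset (e+y) (M - {#e#})")
  case True
  then obtain e where be: "best M y e" and N: "N = add_mset (e+y) (M - {#e#})" by blast
  have eM: "e \<in># M" using be unfolding best_def by auto
  obtain Z0 where M: "M = add_mset e Z0" using eM by (metis multi_member_split)
  have PZ0: "PI Z0" using assms(1) M PI_del by blast
  have "PI (add_mset (e+y) Z0)" using PZ0 assms(2,4) M by (intro PI_add) auto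
  then show ?thesis using N M assms(2,4) by auto
next
  case False
  then have nf: "\<forall>f\<in>#M. 1 < f + y" and N: "N = add_mset y M"
    using assms(3) unfolding stp_def by blast+
  show ?thesis using PI_add[OF assms(1)] nf N assms(2,4) by (auto simp: add.commute)
qed

lemma R_size: "R0 M M' \<or> R1 M M' \<Longrightarrow> size M \<le> size M'"
  unfolding R0_def R1_def by auto


lemma pack_inv:
  "PI (mset L) \<Longrightarrow> \<forall>e\<in>set L. 1/3 < e \<Longrightarrow> \<forall>y\<in>set S. 1/3 < y \<Longrightarrow>
   PI (mset (foldl bf_step L S)) \<and> (\<forall>e\<in>set (foldl bf_step L S). 1/3 < e)"
proof (induction S arbitrary: L)
  case Nil then show ?case by simp
next
  case (Cons y S)
  have st: "PI (mset (bf_step L y)) \<and> (\<forall>e\<in>#mset (bf_step L y). 1/3 < e)"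
    by (rule inv_step[OF Cons.prems(1) _ bf_step_stp]) (use Cons.prems(2,3) in auto)
  then have a: "PI (mset (bf_step L y))" and b: "\<forall>e\<in>set (bf_step L y). 1/3 < e" by auto
  have c: "\<forall>y\<in>set S. 1/3 < y" using Cons.prems(3) by simp
  have "foldl bf_step L (y # S) = foldl bf_step (bf_step L y) S" by simp
  then show ?case using Cons.IH[OF a b c] by simp
qed

lemma R_fold:
  "R0 (mset L) (mset L') \<or> R1 (mset L) (mset L') \<Longrightarrow> \<forall>y\<in>set S. 1/3 < y \<Longrightarrow>
   R0 (mset (foldl bf_step L S)) (mset (foldl bf_step L' S)) \<or> R1 (mset (foldl bf_step L S)) (mset (foldl bf_step L' S))"
proof (induction S arbitrary: L L')
  case Nil then show ?case by simp
next
  case (Cons y S)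
  have y: "1/3 < y" using Cons.prems(2) by simp
  have "R0 (mset (bf_step L y)) (mset (bf_step L' y)) \<or> R1 (mset (bf_step L y)) (mset (bf_step L' y))"
    using Cons.prems(1) R0_step[OF _ bf_step_stp bf_step_stp y] R1_step[OF _ bf_step_stp bf_step_stp y]
    by blast
  then show ?case using Cons.IH Cons.prems(2) by simp
qed

theorem lemma17:
  fixes I I' :: "real list" and i :: nat
  assumes "length I' = length I"
    and "\<forall>x \<in> set I. 1/3 < x \<and> x \<le> 1"
    and "\<forall>x \<in> set I'. 0 < x \<and> x \<le> 1"
    and "i < length I"
    and "I' ! i > I ! i"
    and "\<forall>j < length I. j \<noteq> i \<longrightarrow> I' ! j = I ! j"
  shows "BF I \<le> BF I'"
proof -
  define P where "P = take i I"
  define S where "S = drop (Suc i) I"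
  have I: "I = P @ I ! i # S" unfolding P_def S_def by (rule id_take_nth_drop[OF assms(4)])
  have tk: "take i I' = P" unfolding P_def
    by (rule nth_equalityI) (use assms(1,4,6) in auto)
  have dr: "drop (Suc i) I' = S" unfolding S_def
    by (rule nth_equalityI) (use assms(1,4,6) in auto)
  have "I' = take i I' @ I' ! i # drop (Suc i) I'"
    by (rule id_take_nth_drop) (use assms(1,4) in simp)
  from this[unfolded tk dr] have I': "I' = P @ I' ! i # S" .
  have P3: "\<forall>y\<in>set P. 1/3 < y" unfolding P_def using assms(2) by (auto dest: in_set_takeD)
  have S3: "\<forall>y\<in>set S. 1/3 < y" unfolding S_def using assms(2) by (auto dest: in_set_dropD)
  have x3: "1/3 < I ! i" using assms(2,4) by simp
  have PI0: "PI (mset ([]::real list))" unfolding PI_def by simp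
  have inv: "PI (mset (bf_pack P)) \<and> (\<forall>e\<in>set (bf_pack P). 1/3 < e)"
    unfolding bf_pack_def using pack_inv[OF PI0 _ P3] by simp
  have R: "R0 (mset (bf_step (bf_pack P) (I ! i))) (mset (bf_step (bf_pack P) (I' ! i)))
        \<or> R1 (mset (bf_step (bf_pack P) (I ! i))) (mset (bf_step (bf_pack P) (I' ! i)))"
    using init_step[OF _ _ x3 assms(5) bf_step_stp bf_step_stp] inv by simp
  have "foldl bf_step [] I = foldl bf_step [] (P @ I ! i # S)"
    using arg_cong[OF I, of "foldl bf_step []"] .
  then have "BF I = size (mset (foldl bf_step (bf_step (bf_pack P) (I ! i)) S))"
    unfolding BF_def bf_pack_def by simp
  moreover have "foldl bf_step [] I' = foldl bf_step [] (P @ I' ! i # S)"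
    using arg_cong[OF I', of "foldl bf_step []"] .
  then have "BF I' = size (mset (foldl bf_step (bf_step (bf_pack P) (I' ! i)) S))"
    unfolding BF_def bf_pack_def by simp
  ultimately show ?thesis using R_size[OF R_fold[OF R S3]] by simp
qed

end
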